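(* Let $f:\mathbb{R}^n\to\mathbb{R}$ be subdifferentiable with subgradient Lipschitz continuous with constant $L>0$ (i.e. $\|g_x-g_y\|\le L\|x-y\|$ for all $x,y$, $g_x\in\partial f(x)$, $g_y\in\partial f(y)$). Let $x_0\in\mathbb{R}^n$ and suppose $\Omega=\{x: f(x)\le f(x_0)\}$ is compact and $f(x)\ge C$ on $\Omega$ for some constant $C$. Let $M\ge0$ be an integer, $0<\gamma<1$, and $(\eta_k)$ positive with $\sum_k\eta_k<\infty$. Let $x_{k+1}=x_k+\alpha_kd_k$, where $g_k\in\partial f(x_k)$, $d_k$ is a search direction, and $\alpha_k=(1/2)^{h_k}$ with $h_k$ the smallest integer in $\{0,1,2,\dots\}$ such that $$f(x_k+\alpha_k d_k)\le \max_{0\le j\le \min\{k,M\}} f(x_{k-j})+\gamma\alpha_k g_k^Td_k+\eta_k .$$ Suppose the search directions satisfy, for all $k$: (1) $\mu\|g_k\|\le\|d_k\|\le\nu$ for some constants $\mu,\nu>0$; and (2) $\dfrac{d_k^Tg_k}{\|d_k\|\,\|g_k\|}\le-\epsilon$ for some $\epsilon>0$. Then $$\liminf_{k\to\infty}\|g_k\|=0 .$$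
   Context: A subgradient of $f$ at $x$ is any $g\in\mathbb{R}^n$ with $f(y)\ge f(x)+g^T(y-x)$ for all $y$; $\partial f(x)$ is the set of subgradients at $x$, and $f$ is subdifferentiable if $\partial f(x)\neq\emptyset$ everywhere. *)

theory Defs
  imports "HOL-Analysis.Analysis"
begin

definition subdiff :: "('a::real_inner \<Rightarrow> real) \<Rightarrow> 'a \<Rightarrow> 'a set" where
  "subdiff f x = {g. \<forall>y. f y \<ge> f x + g \<bullet> (y - x)}"

definition subdifferentiable :: "('a::real_inner \<Rightarrow> real) \<Rightarrow> bool" where
  "subdifferentiable f \<longleftrightarrow> (\<forall>x. subdiff f x \<noteq> {})"

end

theory Submission
  imports Defs
begin

theorem mainTheorem4:
  fixes f :: "real ^ 'n \<Rightarrow> real"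
    and L C \<gamma> \<mu> \<nu> \<epsilon> :: real
    and M :: nat
    and \<eta> :: "nat \<Rightarrow> real"
    and x0 :: "real ^ 'n"
    and x g d :: "nat \<Rightarrow> real ^ 'n"
    and h :: "nat \<Rightarrow> nat"
  assumes subdiffble: "subdifferentiable f"
    and L_pos: "L > 0"
    and lip: "\<And>u v gu gv. gu \<in> subdiff f u \<Longrightarrow> gv \<in> subdiff f v \<Longrightarrow>
                 norm (gu - gv) \<le> L * norm (u - v)"
    and cpt: "compact {y. f y \<le> f x0}"
    and lower: "\<And>y. y \<in> {y. f y \<le> f x0} \<Longrightarrow> f y \<ge> C"
    and gamma: "0 < \<gamma>" "\<gamma> < 1"
    and eta_pos: "\<And>k. \<eta> k > 0"
    and eta_sum: "summable \<eta>"
    and x_init: "x 0 = x0"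
    and g_sub: "\<And>k. g k \<in> subdiff f (x k)"
    and step: "\<And>k. x (Suc k) = x k + ((1/2) ^ h k) *\<^sub>R d k"
    and armijo_holds: "\<And>k. f (x k + ((1/2) ^ h k) *\<^sub>R d k)
          \<le> Max ((\<lambda>j. f (x (k - j))) ` {0..min k M}) + \<gamma> * (1/2) ^ h k * (g k \<bullet> d k) + \<eta> k"
    and armijo_least: "\<And>k i. i < h k \<Longrightarrow> \<not> (f (x k + ((1/2) ^ i) *\<^sub>R d k)
          \<le> Max ((\<lambda>j. f (x (k - j))) ` {0..min k M}) + \<gamma> * (1/2) ^ i * (g k \<bullet> d k) + \<eta> k)"
    and mu_nu: "\<mu> > 0" "\<nu> > 0"
    and dir_bounds: "\<And>k. \<mu> * norm (g k) \<le> norm (d k) \<and> norm (d k) \<le> \<nu>"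
    and eps_pos: "\<epsilon> > 0"
    and angle: "\<And>k. (d k \<bullet> g k) / (norm (d k) * norm (g k)) \<le> - \<epsilon>"
  shows "liminf (\<lambda>k. ereal (norm (g k))) = 0"
proof -
  have fC: "\<And>y. f y \<ge> C"
  proof -
    fix y
    have x0C: "f x0 \<ge> C" using lower[of x0] by simp
    show "f y \<ge> C"
    proof (cases "f y \<le> f x0")
      case True then show ?thesis using lower[of y] by simp
    next
      case False then show ?thesis using x0C by simp
    qed
  qed
  have desc: "f v \<le> f u + gx \<bullet> (v - u) + L * (norm (v - u))^2" if gx: "gx \<in> subdiff f u" for u v gx
  proof -
    obtain gy where gy: "gy \<in> subdiff f v" using subdiffble unfolding subdifferentiable_def by blast
    have "f u \<ge> f v + gy \<bullet> (u - v)" using gy unfolding subdiff_def by blast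
    hence 1: "f v \<le> f u + gy \<bullet> (v - u)" by (simp add: inner_diff_right)
    have "gy \<bullet> (v - u) = gx \<bullet> (v - u) + (gy - gx) \<bullet> (v - u)" by (simp add: inner_diff_left)
    also have "(gy - gx) \<bullet> (v - u) \<le> norm (gy - gx) * norm (v - u)" by (rule norm_cauchy_schwarz)
    also have "norm (gy - gx) * norm (v - u) \<le> L * norm (v - u) * norm (v - u)"
      using lip[OF gy gx] by (simp add: mult_right_mono)
    finally show ?thesis using 1 by (simp add: power2_eq_square mult.assoc)
  qed
  have prodpos: "norm (d k) * norm (g k) > 0" for k
  proof (rule ccontr)
    assume "\<not> ?thesis"
    hence "norm (d k) * norm (g k) = 0" by (metis less_eq_real_def mult_nonneg_nonneg norm_ge_zero)
    thus False using angle[of k] eps_pos by (auto simp del: mult_eq_0_iff)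
  qed
  have ang: "d k \<bullet> g k \<le> - \<epsilon> * (norm (d k) * norm (g k))" for k
    using angle[of k] prodpos[of k] by (simp add: divide_le_eq)
  have main: False if cpos: "c > 0" and K: "\<And>k. k \<ge> K \<Longrightarrow> c \<le> norm (g k)" for c K
  proof -
    define a where "a = min 1 ((1-\<gamma>)*\<epsilon>*c/(2*L*\<nu>))"
    have a_pos: "a > 0" unfolding a_def using gamma eps_pos cpos L_pos mu_nu by simp
    have alpha: "a \<le> (1/2)^h k" if kK: "k \<ge> K" for k
    proof (cases "h k")
      case 0 then show ?thesis unfolding a_def by simp
    next
      case (Suc i)
      define t where "t = (1/2::real)^i"
      have tpos: "t > 0" unfolding t_def by simp
      have ht: "(1/2::real)^h k = t/2" using Suc unfolding t_def by simp
      have fail: "\<not> (f (x k + t *\<^sub>R d k)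
          \<le> Max ((\<lambda>j. f (x (k - j))) ` {0..min k M}) + \<gamma> * t * (g k \<bullet> d k) + \<eta> k)"
        using armijo_least[of i k] Suc unfolding t_def by simp
      have "f (x k) \<le> Max ((\<lambda>j. f (x (k - j))) ` {0..min k M})"
        by (rule Max_ge) (auto intro!: image_eqI[where x=0])
      with fail eta_pos[of k] have 1: "f (x k + t *\<^sub>R d k) > f (x k) + \<gamma> * t * (g k \<bullet> d k)" by linarith
      have 2: "f (x k + t *\<^sub>R d k) \<le> f (x k) + g k \<bullet> (t *\<^sub>R d k) + L * (norm (t *\<^sub>R d k))^2"
        using desc[OF g_sub[of k], of "x k + t *\<^sub>R d k"] by simp
      have "\<gamma> * t * (g k \<bullet> d k) < t * (g k \<bullet> d k) + L * t^2 * (norm (d k))^2"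
        using 1 2 tpos by (simp add: power_mult_distrib)
      hence "t * (\<gamma> * (g k \<bullet> d k)) < t * ((g k \<bullet> d k) + L * t * (norm (d k))^2)"
        by (simp add: power2_eq_square algebra_simps)
      hence "\<gamma> * (g k \<bullet> d k) < (g k \<bullet> d k) + L * t * (norm (d k))^2"
        using tpos mult_less_cancel_left_pos by blast
      hence 3: "(1-\<gamma>) * (-(g k \<bullet> d k)) < L * t * (norm (d k))^2" by (simp add: algebra_simps)
      have "(1-\<gamma>) * (\<epsilon> * (norm (d k) * norm (g k))) \<le> (1-\<gamma>) * (-(g k \<bullet> d k))"
      proof -
        have "\<epsilon> * (norm (d k) * norm (g k)) \<le> -(g k \<bullet> d k)" using ang[of k] by (simp add: inner_commute)
        thus ?thesis using gamma by (intro mult_left_mono) auto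
      qed
      with 3 have "(1-\<gamma>) * \<epsilon> * norm (g k) * norm (d k) < (L * t * norm (d k)) * norm (d k)"
        by (simp add: power2_eq_square algebra_simps)
      moreover have nd: "norm (d k) > 0" using prodpos[of k]
        by (metis mult_eq_0_iff norm_ge_zero order_less_le)
      ultimately have 4: "(1-\<gamma>) * \<epsilon> * norm (g k) < L * t * norm (d k)" by simp
      have "(1-\<gamma>) * \<epsilon> * c \<le> (1-\<gamma>) * \<epsilon> * norm (g k)"
        using K[OF kK] gamma eps_pos by simp
      also have "\<dots> < L * t * norm (d k)" by (rule 4)
      also have "\<dots> \<le> L * t * \<nu>" using dir_bounds[of k] L_pos tpos by simp
      finally have "(1-\<gamma>) * \<epsilon> * c / (2*L*\<nu>) < t/2" using L_pos mu_nu
        by (simp add: divide_less_eq algebra_simps)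
      moreover have "a \<le> (1-\<gamma>)*\<epsilon>*c/(2*L*\<nu>)" unfolding a_def by simp
      ultimately show ?thesis unfolding ht by linarith
    qed
    define \<delta> where "\<delta> = \<gamma>*\<epsilon>*\<mu>*a*c^2"
    have d_pos: "\<delta> > 0" unfolding \<delta>_def using gamma eps_pos mu_nu a_pos cpos by simp
    have dec: "\<exists>j\<le>min k M. f (x (Suc k)) \<le> f (x (k-j)) - \<delta> + \<eta> k" if kK: "k \<ge> K" for k
    proof -
      have fin: "finite ((\<lambda>j. f (x (k - j))) ` {0..min k M})" by simp
      have ne: "(\<lambda>j. f (x (k - j))) ` {0..min k M} \<noteq> {}" by simp
      obtain j where j: "j \<in> {0..min k M}" and jm: "Max ((\<lambda>j. f (x (k - j))) ` {0..min k M}) = f (x (k-j))"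
        using Max_in[OF fin ne] by (metis (no_types, lifting) imageE)
      define al where "al = (1/2::real)^h k"
      have alpos: "al > 0" unfolding al_def by simp
      have gc: "c \<le> norm (g k)" by (rule K[OF kK])
      have "\<gamma> * al * (g k \<bullet> d k) \<le> \<gamma> * al * (- \<epsilon> * (norm (d k) * norm (g k)))"
      proof -
        have "g k \<bullet> d k \<le> - \<epsilon> * (norm (d k) * norm (g k))" using ang[of k] by (simp add: inner_commute)
        moreover have "0 \<le> \<gamma> * al" using gamma alpos by simp
        ultimately show ?thesis by (metis mult_left_mono mult.assoc)
      qed
      also have "\<dots> = - (\<gamma> * al * \<epsilon>) * (norm (d k) * norm (g k))" by simp
      also have "\<dots> \<le> - (\<gamma> * a * \<epsilon>) * (\<mu> * c * c)"
      proof -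
        have "\<mu> * c \<le> norm (d k)" using dir_bounds[of k] gc mu_nu
          by (meson mult_left_mono order_trans less_imp_le)
        hence "\<mu> * c * c \<le> norm (d k) * norm (g k)" using gc cpos mu_nu
          by (intro mult_mono) auto
        moreover have "\<gamma> * a * \<epsilon> \<le> \<gamma> * al * \<epsilon>" using alpha[OF kK] gamma eps_pos unfolding al_def by simp
        moreover have "0 \<le> \<gamma> * a * \<epsilon>" "0 \<le> \<mu> * c * c" using gamma eps_pos a_pos mu_nu cpos by auto
        ultimately have "(\<gamma> * a * \<epsilon>) * (\<mu> * c * c) \<le> (\<gamma> * al * \<epsilon>) * (norm (d k) * norm (g k))"
          by (meson mult_mono' order_trans less_imp_le)
        thus ?thesis by simp
      qed
      also have "\<dots> = - \<delta>" unfolding \<delta>_def by (simp add: power2_eq_square algebra_simps)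
      finally have "\<gamma> * al * (g k \<bullet> d k) \<le> - \<delta>" .
      moreover have "f (x (Suc k)) \<le> f (x (k-j)) + \<gamma> * al * (g k \<bullet> d k) + \<eta> k"
        using armijo_holds[of k] step[of k] jm unfolding al_def by simp
      ultimately show ?thesis using j by force
    qed
    define T where "T m = (\<Sum>i. \<eta> (i + m)) " for m
    have Tf: "T m = suminf \<eta> - (\<Sum>i<m. \<eta> i)" for m
      unfolding T_def using suminf_minus_initial_segment[OF eta_sum] by simp
    have T0: "T m \<ge> 0" for m
      unfolding T_def by (rule suminf_nonneg) (use eta_sum summable_iff_shift[of \<eta> m] eta_pos less_imp_le in auto)
    have Tmono: "T m \<le> T m'" if "m' \<le> m" for m m'
    proof -
      have "(\<Sum>i<m'. \<eta> i) \<le> (\<Sum>i<m. \<eta> i)"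
        by (rule sum_mono2) (use that eta_pos less_imp_le in auto)
      thus ?thesis unfolding Tf by simp
    qed
    have Tstep: "T (Suc m) + \<eta> m = T m" for m unfolding Tf by simp
    define Q where "Q m = f (x m) + T m" for m
    have QC: "Q m \<ge> C" for m unfolding Q_def using fC[of "x m"] T0[of m] by simp
    have Qstep: "\<exists>j\<le>M. j \<le> k \<and> Q (Suc k) \<le> Q (k-j) - \<delta>" if kK: "k \<ge> K" for k
    proof -
      obtain j where j: "j \<le> min k M" and fj: "f (x (Suc k)) \<le> f (x (k-j)) - \<delta> + \<eta> k"
        using dec[OF kK] by blast
      have "T (Suc k) + \<eta> k \<le> T (k - j)" using Tstep[of k] Tmono[of "k-j" k] by simp
      hence "Q (Suc k) \<le> Q (k-j) - \<delta>" unfolding Q_def using fj by simp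
      thus ?thesis using j by auto
    qed
    define k0 where "k0 = K + M"
    define B where "B = Max (Q ` {k0-M..k0})"
    have win: "Q m \<le> B - real n * \<delta>" if "k0 + n*(M+1) - M \<le> m" "m \<le> k0 + n*(M+1)" for n m
      using that
    proof (induction n arbitrary: m)
      case 0
      then have "m \<in> {k0-M..k0}" by simp
      then have "Q m \<le> B" unfolding B_def by (intro Max_ge) auto
      then show ?case by simp
    next
      case (Suc n)
      define k where "k = k0 + n*(M+1)"
      have inner: "Q (k+i) \<le> B - real (Suc n) * \<delta>" if "1 \<le> i" for i
        using that
      proof (induction i rule: less_induct)
        case (less i)
        have kK: "k + i - 1 \<ge> K" unfolding k_def k0_def using less.prems by simp
        obtain j where j: "j \<le> M" "j \<le> k + i - 1" and qj: "Q (Suc (k+i-1)) \<le> Q (k+i-1-j) - \<delta>"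
          using Qstep[OF kK] by blast
        have si: "Suc (k+i-1) = k + i" using less.prems by simp
        have "Q (k+i-1-j) \<le> B - real n * \<delta>"
        proof (cases "k+i-1-j \<le> k")
          case True
          have "k0 + n*(M+1) - M \<le> k+i-1-j" using j less.prems unfolding k_def by simp
          then show ?thesis using Suc.IH True unfolding k_def by blast
        next
          case False
          define i' where "i' = i - 1 - j"
          have "k + i' = k+i-1-j" "1 \<le> i'" "i' < i" using False less.prems unfolding i'_def by auto
          then show ?thesis using less.IH[of i'] d_pos by (simp add: algebra_simps)
        qed
        then show ?case using qj si by (simp add: algebra_simps)
      qed
      have "m = k + (m - k)" "1 \<le> m - k" using Suc.prems unfolding k_def by auto
      then show ?case using inner[of "m-k"] by metis
    qed
    obtain n where n: "real n > (B - C) / \<delta>" using reals_Archimedean2 by blast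
    have "Q (k0 + n*(M+1)) \<le> B - real n * \<delta>" by (rule win) auto
    moreover have "real n * \<delta> > B - C" using n d_pos by (simp add: divide_less_eq)
    ultimately show False using QC[of "k0 + n*(M+1)"] by simp
  qed
  have ge: "0 \<le> liminf (\<lambda>k. ereal (norm (g k)))"
    by (rule Liminf_bounded) auto
  have le: "\<not> liminf (\<lambda>k. ereal (norm (g k))) > 0"
  proof
    assume pos: "liminf (\<lambda>k. ereal (norm (g k))) > 0"
    obtain c where c: "0 < c" "ereal c < liminf (\<lambda>k. ereal (norm (g k)))"
      using ereal_dense2[OF pos] by (metis ereal_less(2) less_ereal.simps(4) ereal_cases less_ereal.simps(1) order_less_trans zero_ereal_def)
    have "eventually (\<lambda>k. ereal c < ereal (norm (g k))) sequentially"
      by (rule less_LiminfD[OF c(2)])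
    then obtain K where "\<And>k. k \<ge> K \<Longrightarrow> c \<le> norm (g k)"
      unfolding eventually_sequentially by (meson less_ereal.simps(1) less_imp_le)
    thus False using main c(1) by blast
  qed
  show ?thesis using ge le by simp
qed

end
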